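(* Let $a\ge 2$ be an integer, $B=(1,a,a+1)$ and let $M>0$ be an integer. If $(a+1)\nmid M$ and $M\ge a\left(\lfloor \frac{M}{a+1}\rfloor+1\right)$, then $O_B(M)=1+\lfloor \frac{M}{a+1}\rfloor$. Otherwise, $O_B(M)=M-a\lfloor \frac{M}{a+1}\rfloor$.
   Context: $\mathbb{N}=\{0,1,2,\dots\}$. For $B=(b_1,\dots,b_k)$ of positive integers and an integer $M$, $O_B(M)=\min\{\sum_{i=1}^k x_i : \sum_{i=1}^k b_ix_i=M,\ x_i\in\mathbb{N}\}$. *)

theory Defs
  imports Main
begin

definition O_B :: "int list \<Rightarrow> int \<Rightarrow> int" where
  "O_B B M = Min {int (sum_list x) | x :: nat list.
       length x = length B \<and> (\<Sum>i<length B. B ! i * int (x ! i)) = M}"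

end

theory Submission
  imports Defs
begin

lemma setchar:
  "{int (sum_list x) | x :: nat list.
       length x = length [1, a, a+1] \<and> (\<Sum>i<length [1, a, a+1]. [1, a, a+1] ! i * int (x ! i)) = M}
   = {int x0 + int x1 + int x2 | x0 x1 x2. int x0 + a * int x1 + (a+1) * int x2 = M}"
  (is "?A = ?B")
proof
  show "?A \<subseteq> ?B"
  proof
    fix s assume "s \<in> ?A"
    then obtain x :: "nat list" where x: "length x = length [1, a, a+1]" "s = int (sum_list x)"
      "(\<Sum>i<length [1, a, a+1]. [1, a, a+1] ! i * int (x ! i)) = M" by blast
    have "length x = Suc (Suc (Suc 0))" using x(1) by simp
    then obtain x0 x1 x2 where "x = [x0,x1,x2]"
      by (metis length_Suc_conv length_0_conv)
    with x have "s = int x0 + int x1 + int x2 \<and> int x0 + a * int x1 + (a+1) * int x2 = M"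
      by (auto simp: numeral_3_eq_3 lessThan_Suc algebra_simps)
    then show "s \<in> ?B" by blast
  qed
next
  show "?B \<subseteq> ?A"
  proof
    fix s assume "s \<in> ?B"
    then obtain x0 x1 x2 where x: "s = int x0 + int x1 + int x2"
      "int x0 + a * int x1 + (a+1) * int x2 = M" by auto
    then have "length [x0,x1,x2] = length [1, a, a+1] \<and>
      (\<Sum>i<length [1, a, a+1]. [1, a, a+1] ! i * int ([x0,x1,x2] ! i)) = M \<and>
      s = int (sum_list [x0,x1,x2])"
      by (auto simp: numeral_3_eq_3 lessThan_Suc)
    then show "s \<in> ?A" by blast
  qed
qed

lemma lower:
  fixes a M X Y Z :: int
  assumes a: "a \<ge> 2" and X: "X \<ge> 0" and Y: "Y \<ge> 0" and Z: "Z \<ge> 0"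
    and eq: "X + a*Y + (a+1)*Z = M"
  shows "X + Y + Z \<ge> (if \<not> (a + 1) dvd M \<and> M \<ge> a * (M div (a + 1) + 1)
     then 1 + M div (a + 1) else M - a * (M div (a + 1)))"
proof -
  define q where "q = M div (a+1)"
  define r where "r = M mod (a+1)"
  have M: "M = q*(a+1) + r" unfolding q_def r_def using div_mult_mod_eq[of M "a+1"] by simp
  have r: "0 \<le> r" "r < a+1" unfolding r_def using a pos_mod_bound[of "a+1" M] by auto
  define s where "s = X+Y+Z"
  have "X*a \<ge> 0" using X a by simp
  have "(a+1)*s - M = X*a + Y" unfolding s_def using eq by (simp add: algebra_simps)
  then have ub: "M \<le> (a+1)*s" using Y \<open>X*a \<ge> 0\<close> by linarith
  have sq: "s \<ge> q"
  proof (rule ccontr)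
    assume "\<not> s \<ge> q"
    then have "s + 1 \<le> q" by simp
    then have "(a+1)*(s+1) \<le> (a+1)*q" using a by (intro mult_left_mono) auto
    then show False using ub M r by (simp add: algebra_simps)
  qed
  have sq1: "s \<ge> q+1" if "r > 0"
  proof (rule ccontr)
    assume "\<not> s \<ge> q+1"
    then have "s \<le> q" by simp
    then have "(a+1)*s \<le> (a+1)*q" using a by (intro mult_left_mono) auto
    then show False using ub M r that by (simp add: algebra_simps)
  qed
  have sqr: "s \<ge> q + r" if "q + r < a"
  proof (rule ccontr)
    assume "\<not> s \<ge> q + r"
    define t where "t = Y + Z"
    have e: "a*(t-q) = (q+r-s) + Y" using eq M unfolding t_def s_def by (simp add: algebra_simps)
    have "Y \<le> s" unfolding s_def using X Z by simp
    then have lt: "(q+r-s) + Y < a" "0 < (q+r-s) + Y" using that Y \<open>\<not> s \<ge> q + r\<close> by auto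
    show False
    proof (cases "t - q \<le> 0")
      case True
      then have "a*(t-q) \<le> 0" using a by (simp add: mult_nonneg_nonpos)
      then show False using e lt by simp
    next
      case False
      then have "a*1 \<le> a*(t-q)" using a by (intro mult_left_mono) auto
      then show False using e lt by simp
    qed
  qed
  have dv: "(a+1) dvd M \<longleftrightarrow> r = 0" unfolding r_def by auto
  have c: "M \<ge> a * (q + 1) \<longleftrightarrow> q + r \<ge> a" using M by (simp add: algebra_simps)
  have v: "M - a*q = q + r" using M by (simp add: algebra_simps)
  show ?thesis
    unfolding s_def[symmetric] q_def[symmetric] using dv c v sq sq1 sqr r
    by (cases "r = 0") auto
qed

theorem mainTheorem2:
  fixes a M :: int
  assumes "a \<ge> 2" and "M > 0"
  shows "O_B [1, a, a + 1] M =
    (if \<not> (a + 1) dvd M \<and> M \<ge> a * (M div (a + 1) + 1)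
     then 1 + M div (a + 1)
     else M - a * (M div (a + 1)))"
  (is "_ = ?v")
proof -
  let ?S = "{int x0 + int x1 + int x2 | x0 x1 x2. int x0 + a * int x1 + (a+1) * int x2 = M}"
  have O: "O_B [1, a, a + 1] M = Min ?S" unfolding O_B_def setchar ..
  have sub: "?S \<subseteq> {0..M}"
  proof
    fix s assume "s \<in> ?S"
    then obtain x0 x1 x2 where x: "s = int x0 + int x1 + int x2"
      "int x0 + a * int x1 + (a+1) * int x2 = M" by auto
    have "1 * int x1 \<le> a * int x1" "1 * int x2 \<le> (a+1) * int x2"
      using assms(1) by (intro mult_right_mono; simp)+
    then show "s \<in> {0..M}" using x by auto
  qed
  have fin: "finite ?S" using sub finite_subset by blast
  have low: "\<forall>s\<in>?S. ?v \<le> s"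
    using lower[OF assms(1)] by fastforce
  define q where "q = M div (a+1)"
  define r where "r = M mod (a+1)"
  have M: "M = q*(a+1) + r" unfolding q_def r_def using div_mult_mod_eq[of M "a+1"] by simp
  have r: "0 \<le> r" "r < a+1" unfolding r_def using assms pos_mod_bound[of "a+1" M] by auto
  have q: "q \<ge> 0" unfolding q_def using assms by (simp add: pos_imp_zdiv_nonneg_iff)
  have dv: "(a+1) dvd M \<longleftrightarrow> r = 0" unfolding r_def by auto
  have c: "M \<ge> a * (q + 1) \<longleftrightarrow> q + r \<ge> a" using M by (simp add: algebra_simps)
  have v: "M - a*q = q + r" using M by (simp add: algebra_simps)
  have mem: "?v \<in> ?S"
  proof (cases "r \<noteq> 0 \<and> q + r \<ge> a")
    case True
    then have "?v = q + 1" using dv c unfolding q_def by auto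
    moreover have "int 0 + a * int (nat (a+1-r)) + (a+1) * int (nat (q+r-a)) = M"
      using True r M by (simp add: algebra_simps)
    moreover have "q + 1 = int 0 + int (nat (a+1-r)) + int (nat (q+r-a))"
      using True r by simp
    ultimately show ?thesis unfolding mem_Collect_eq
      by (intro exI[of _ 0] exI[of _ "nat (a+1-r)"] exI[of _ "nat (q+r-a)"]) simp
  next
    case False
    then have "?v = q + r" using dv c v unfolding q_def by auto
    moreover have "int (nat r) + a * int 0 + (a+1) * int (nat q) = M"
      using r q M by (simp add: algebra_simps)
    moreover have "q + r = int (nat r) + int 0 + int (nat q)"
      using r q by simp
    ultimately show ?thesis unfolding mem_Collect_eq
      by (intro exI[of _ "nat r"] exI[of _ 0] exI[of _ "nat q"]) simp
  qed
  show ?thesis unfolding O using fin mem low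
    by (intro Min_eqI) auto
qed

end
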